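(* Let $\Phi(t)$ be a motion of the toy top with Cayley–Klein parameters $\alpha,\beta,\gamma,\delta$, let $c=2s\alpha\beta=\rho e^{i\phi}$ be the trajectory of the tip in polar form (so $\rho=s\sqrt{1-u^2}$), and let $u,w,e_4,w_{\pm1}$ be as in the context. At every time at which $-1<u<1$, $$i\,\phi'(t)=\frac12\,\frac{u^2-e_4^2}{1-e_4^2}\left(\frac{w_{-1}}{u+1}-\frac{w_{+1}}{u-1}\right)\frac{u'}{w}.$$
   Context: $\mathrm{SU}(2)$: complex $2\times2$ matrices $\begin{pmatrix}\alpha&\beta\\ \gamma&\delta\end{pmatrix}$ with $\alpha\delta-\beta\gamma=1$, $\delta=\bar\alpha$, $\gamma=-\bar\beta$; $\mathrm{su}(2)\cong\mathbb{R}^3$ via $(x_1,x_2,x_3)\mapsto\frac12\begin{pmatrix}ix_3&-x_2+ix_1\\ x_2+ix_1&-ix_3\end{pmatrix}$, $[x,y]=xy-yx$, $\langle x,y\rangle=-2\mathrm{Tr}(xy)$, $k=\frac12\mathrm{diag}(i,-i)$. Toy top parameters: $A,C>0$ moments of inertia (perpendicular axis through center of mass, symmetry axis), $s>0$ tip-to-center-of-mass distance, $p>0$ equal to $s$ times mass, gravity $1$. For a curve $\Phi(t)$: $\omega=\Phi'\Phi^{-1}$, $r=\Phi k\Phi^{-1}$, $T=\frac12A\langle\omega,\omega\rangle+\frac12(C-A)\langle\omega,r\rangle^2+\frac12ps\langle[r,k],\omega\rangle^2$, $V=p\langle r,k\rangle$, $m=A\omega+(C-A)\langle\omega,r\rangle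 r+ps\langle[r,k],\omega\rangle[r,k]$, $DL=(C-A)\langle\omega,r\rangle[r,\omega]+ps\langle[r,k],\omega\rangle[r,[k,\omega]]+p[r,k]$. A motion is a solution of $m'=[\omega,m]+DL$, $\Phi'=\omega\Phi$, with first integrals $h=T+V$, $l=\langle m,k\rangle$, $n=\langle m,r\rangle$; $u=\langle r,k\rangle$. Let $e_1\le e_2\le e_3$ be the roots of $\frac1p(1-u^2)(h-\frac{n^2}{2C}-pu)-\frac1{2Ap}(l-nu)^2$, $e_4=\sqrt{1+A/(ps)}$, $R(u)=(u-e_1)(u-e_2)(u-e_3)(u^2-e_4^2)$, $w(t)=-i\sqrt{s/2}(u^2-e_4^2)u'(t)$ (so $w^2=R(u)$), with $u'/w$ meaning $i\sqrt{2/s}/(u^2-e_4^2)$. The constants $w_{\pm1}$ are the square roots of $R(\pm1)$ given by $w_{\pm1}=\sqrt{s/2}\,(1-e_4^2)\,(l\mp n)/A$. The plane of the tip is identified with $\mathbb{C}$ via $(x_1,x_2)\mapsto x_1+ix_2$ (horizontal fixed-frame coordinates), $c$ being the projection of $-s r$; $\phi$ is a continuous choice of argument of $c$ on time intervals where $c\ne0$. *)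

theory Defs
  imports "HOL-Analysis.Analysis"
begin

type_synonym cmat = "complex^2^2"

text \<open>Entries: M$1$1 = alpha, M$1$2 = beta, M$2$1 = gamma, M$2$2 = delta.\<close>

definition SU2 :: "cmat set" where
  "SU2 = {M. M$1$1 * M$2$2 - M$1$2 * M$2$1 = 1
            \<and> M$2$2 = cnj (M$1$1) \<and> M$2$1 = - cnj (M$1$2)}"

definition su2_of :: "real^3 \<Rightarrow> cmat" where
  "su2_of x = (\<chi> i j.
     if i = 1 \<and> j = 1 then (\<i> * of_real (x$3)) / 2
     else if i = 1 \<and> j = 2 then (- of_real (x$2) + \<i> * of_real (x$1)) / 2
     else if i = 2 \<and> j = 1 then (of_real (x$2) + \<i> * of_real (x$1)) / 2
     else (- \<i> * of_real (x$3)) / 2)"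

definition su2_coords :: "cmat \<Rightarrow> real^3" where
  "su2_coords M = (THE x. su2_of x = M)"

definition brk :: "cmat \<Rightarrow> cmat \<Rightarrow> cmat" where
  "brk x y = x ** y - y ** x"

text \<open>The inner product -2 Tr(xy), real-valued on su(2).\<close>
definition ip :: "cmat \<Rightarrow> cmat \<Rightarrow> real" where
  "ip x y = Re (- 2 * trace (x ** y))"

definition kk :: cmat where
  "kk = (\<chi> i j. if i = 1 \<and> j = 1 then \<i> / 2 else if i = 2 \<and> j = 2 then - \<i> / 2 else 0)"

definition omega :: "(real \<Rightarrow> cmat) \<Rightarrow> real \<Rightarrow> cmat" where
  "omega \<Phi> t = vector_derivative \<Phi> (at t) ** matrix_inv (\<Phi> t)"

definition rvec :: "(real \<Rightarrow> cmat) \<Rightarrow> real \<Rightarrow> cmat" where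
  "rvec \<Phi> t = \<Phi> t ** kk ** matrix_inv (\<Phi> t)"

definition mom :: "real \<Rightarrow> real \<Rightarrow> real \<Rightarrow> real \<Rightarrow> cmat \<Rightarrow> cmat \<Rightarrow> cmat" where
  "mom A C p s \<omega> r = A *\<^sub>R \<omega> + ((C - A) * ip \<omega> r) *\<^sub>R r
      + (p * s * ip (brk r kk) \<omega>) *\<^sub>R brk r kk"

definition DLag :: "real \<Rightarrow> real \<Rightarrow> real \<Rightarrow> real \<Rightarrow> cmat \<Rightarrow> cmat \<Rightarrow> cmat" where
  "DLag A C p s \<omega> r = ((C - A) * ip \<omega> r) *\<^sub>R brk r \<omega>
      + (p * s * ip (brk r kk) \<omega>) *\<^sub>R brk r (brk kk \<omega>) + p *\<^sub>R brk r kk"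

definition is_motion :: "real \<Rightarrow> real \<Rightarrow> real \<Rightarrow> real \<Rightarrow> real set \<Rightarrow> (real \<Rightarrow> cmat) \<Rightarrow> bool" where
  "is_motion A C p s I \<Phi> \<longleftrightarrow>
     (\<forall>t\<in>I. \<Phi> t \<in> SU2 \<and> \<Phi> differentiable at t
        \<and> ((\<lambda>\<tau>. mom A C p s (omega \<Phi> \<tau>) (rvec \<Phi> \<tau>)) has_vector_derivative
             (brk (omega \<Phi> t) (mom A C p s (omega \<Phi> t) (rvec \<Phi> t))
              + DLag A C p s (omega \<Phi> t) (rvec \<Phi> t))) (at t))"

definition uu :: "(real \<Rightarrow> cmat) \<Rightarrow> real \<Rightarrow> real" where
  "uu \<Phi> t = ip (rvec \<Phi> t) kk"

definition ll :: "real \<Rightarrow> real \<Rightarrow> real \<Rightarrow> real \<Rightarrow> (real \<Rightarrow> cmat) \<Rightarrow> real \<Rightarrow> real" where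
  "ll A C p s \<Phi> t = ip (mom A C p s (omega \<Phi> t) (rvec \<Phi> t)) kk"

definition nn :: "real \<Rightarrow> real \<Rightarrow> real \<Rightarrow> real \<Rightarrow> (real \<Rightarrow> cmat) \<Rightarrow> real \<Rightarrow> real" where
  "nn A C p s \<Phi> t = ip (mom A C p s (omega \<Phi> t) (rvec \<Phi> t)) (rvec \<Phi> t)"

definition tip :: "real \<Rightarrow> (real \<Rightarrow> cmat) \<Rightarrow> real \<Rightarrow> complex" where
  "tip s \<Phi> t = (let x = su2_coords (- (s *\<^sub>R rvec \<Phi> t)) in Complex (x$1) (x$2))"

definition e4 :: "real \<Rightarrow> real \<Rightarrow> real \<Rightarrow> real" where
  "e4 A p s = sqrt (1 + A / (p * s))"

definition wp1 :: "real \<Rightarrow> real \<Rightarrow> real \<Rightarrow> real \<Rightarrow> real \<Rightarrow> real" where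
  "wp1 A p s l n = sqrt (s / 2) * (1 - (e4 A p s)^2) * (l - n) / A"

definition wm1 :: "real \<Rightarrow> real \<Rightarrow> real \<Rightarrow> real \<Rightarrow> real \<Rightarrow> real" where
  "wm1 A p s l n = sqrt (s / 2) * (1 - (e4 A p s)^2) * (l + n) / A"

text \<open>The meaning of u'/w: i sqrt(2/s) / (u^2 - e4^2).\<close>
definition u_over_w :: "real \<Rightarrow> real \<Rightarrow> real \<Rightarrow> real \<Rightarrow> complex" where
  "u_over_w A p s u = \<i> * of_real (sqrt (2 / s)) / of_real (u^2 - (e4 A p s)^2)"

end

theory Submission
  imports Defs
begin

lemma mat22_eq: "(M::cmat) = N \<longleftrightarrow> M$1$1=N$1$1 \<and> M$1$2 = N$1$2 \<and> M$2$1 = N$2$1 \<and> M$2$2=N$2$2"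
  by (auto simp: vec_eq_iff forall_2)

lemma mult22: "((X::cmat) ** Y) $ i $ j = X$i$1 * Y$1$j + X$i$2*Y$2$j"
  by (simp add: matrix_matrix_mult_def sum_2)

lemma trace22: "trace (X::cmat) = X$1$1 + X$2$2"
  by (simp add: trace_def sum_2)

definition mk :: "complex \<Rightarrow> complex \<Rightarrow> complex \<Rightarrow> complex \<Rightarrow> cmat" where
  "mk a b c d = (\<chi> i j. if i = 1 \<and> j = 1 then a else if i = 1 \<and> j = 2 then b else if i = 2 \<and> j = 1 then c else d)"

lemma mk_nth[simp]: "mk a b c d $1$1 = a" "mk a b c d $1$2 = b" "mk a b c d $2$1 = c" "mk a b c d $2$2 = d"
  by (simp_all add: mk_def)

lemma mk_eta: "(M::cmat) = mk (M$1$1) (M$1$2) (M$2$1) (M$2$2)"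
  by (simp add: mat22_eq)

lemma mk_mult: "mk a b c d ** mk a' b' c' d' = mk (a*a'+b*c') (a*b'+b*d') (c*a'+d*c') (c*b'+d*d')"
  by (simp add: mat22_eq mult22)

lemma kk_mk: "kk = mk (\<i>/2) 0 0 (-\<i>/2)"
  by (simp add: mat22_eq kk_def)

lemma mk_trace: "trace (mk a b c d) = a + d" by (simp add: trace22)
lemma mk_minus: "mk a b c d - mk a' b' c' d' = mk (a-a') (b-b') (c-c') (d-d')" by (simp add: mat22_eq)
lemma mk_one: "mat 1 = mk 1 0 0 1" by (simp add: mat22_eq mat_def)

lemma matrix_inv_eq: assumes "(M::cmat) ** N = mat 1" "N ** M = mat 1" shows "matrix_inv M = N"
proof -
  have "\<exists>N'. M ** N' = mat 1 \<and> N' ** M = mat 1" using assms by blast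
  then have h: "M ** matrix_inv M = mat 1 \<and> matrix_inv M ** M = mat 1"
    unfolding matrix_inv_def by (rule someI_ex)
  have "matrix_inv M = matrix_inv M ** (M ** N)" using assms by simp
  also have "\<dots> = N" using h by (simp add: matrix_mul_assoc)
  finally show ?thesis .
qed

lemma core:
  fixes a b a' b' :: complex
  assumes n: "cmod a ^2 + cmod b ^2 = 1" and a0: "a \<noteq> 0" and b0: "b \<noteq> 0"
  defines "M \<equiv> mk a b (- cnj b) (cnj a)" and "N \<equiv> mk (cnj a) (-b) (cnj b) a"
   and "D \<equiv> mk a' b' (- cnj b') (cnj a')"
  defines "w \<equiv> D ** N" and "r \<equiv> M ** kk ** N" 
  shows "Im ((a' * b + a * b') / (a * b)) * (1 - (ip r kk)^2) = ip w kk - ip r kk * ip w r"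
proof -
  obtain a1 a2 where ea: "a = Complex a1 a2" by (metis complex.exhaust_sel)
  obtain b1 b2 where eb: "b = Complex b1 b2" by (metis complex.exhaust_sel)
  obtain c1 c2 where ec: "a' = Complex c1 c2" by (metis complex.exhaust_sel)
  obtain d1 d2 where ed: "b' = Complex d1 d2" by (metis complex.exhaust_sel)
  have u: "ip r kk = (a1^2+a2^2) - (b1^2+b2^2)"
    unfolding r_def M_def N_def kk_mk ip_def ea eb
    by (simp add: mk_mult mk_trace algebra_simps power2_eq_square)
  have wk: "ip w kk = 2*((c2*a1 - c1*a2) + (d2*b1 - d1*b2))"
    unfolding w_def D_def N_def kk_mk ip_def ea eb ec ed
    by (simp add: mk_mult mk_trace algebra_simps power2_eq_square)
  have wr: "ip w r = 2*((a1^2+a2^2) + (b1^2+b2^2))*((c2*a1 - c1*a2) - (d2*b1 - d1*b2))"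
    unfolding w_def r_def M_def D_def N_def kk_mk ip_def ea eb ec ed
    by (simp add: mk_mult mk_trace algebra_simps power2_eq_square)
  define P where "P = a1^2+a2^2"
  define Q where "Q = b1^2+b2^2"
  define x where "x = c2*a1 - c1*a2"
  define y where "y = d2*b1 - d1*b2"
  have PQ: "P + Q = 1" using n unfolding P_def Q_def ea eb by (simp add: cmod_power2)
  have P0: "P \<noteq> 0" using a0 unfolding P_def ea by (simp add: complex_eq_iff sum_power2_eq_zero_iff)
  have Q0: "Q \<noteq> 0" using b0 unfolding Q_def eb by (simp add: complex_eq_iff sum_power2_eq_zero_iff)
  have "(a' * b + a * b') / (a * b) = a'/a + b'/b" using a0 b0 by (simp add: field_simps)
  then have im: "Im ((a' * b + a * b') / (a * b)) = x/P + y/Q"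
    unfolding ea eb ec ed x_def y_def P_def Q_def by (simp add: Im_divide power2_eq_square algebra_simps)
  have Qe: "Q = 1 - P" using PQ by simp
  have "(x/P + y/Q) * (1 - (P - Q)^2) = 4*(Q*x+P*y)"
    using P0 Q0 unfolding Qe by (simp add: field_simps power2_eq_square)
  moreover have "2*(x+y) - (P-Q)*(2*(P+Q)*(x-y)) = 4*(Q*x+P*y)"
    unfolding Qe by (simp add: algebra_simps)
  ultimately show ?thesis unfolding im u wk wr P_def[symmetric] Q_def[symmetric] x_def[symmetric] y_def[symmetric] 
    by simp
qed

lemma ip_expl: "ip X Y = Re(-2*(X$1$1*Y$1$1 + X$1$2*Y$2$1 + X$2$1*Y$1$2 + X$2$2*Y$2$2))"
  by (simp add: ip_def trace22 mult22 algebra_simps)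

lemma ip_add: "ip (x+y) z = ip x z + ip y z" by (simp add: ip_expl algebra_simps)
lemma ip_scaleR: "ip (c *\<^sub>R x) z = c * ip x z"
  by (simp add: ip_expl algebra_simps vector_scaleR_component)
lemma ip_sym: "ip x y = ip y x" by (simp add: ip_expl algebra_simps)
lemma ip_brk_kk: "ip (brk r kk) kk = 0"
  by (simp add: ip_expl brk_def mult22 kk_def algebra_simps)
lemma ip_brk_r: "ip (brk r kk) r = 0"
  by (simp add: ip_expl brk_def mult22 kk_def algebra_simps)

lemma l_minus_nu:
  assumes "ip r r = 1"
  shows "ip (mom A C p s w r) kk - ip (mom A C p s w r) r * ip r kk = A * (ip w kk - ip r kk * ip w r)"
  unfolding mom_def ip_add ip_scaleR ip_brk_kk ip_brk_r assms ip_sym[of r w] by (simp add: algebra_simps)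

lemma su2_form: assumes "M \<in> SU2"
  shows "M = mk (M$1$1) (M$1$2) (- cnj (M$1$2)) (cnj (M$1$1))" "cmod (M$1$1) ^2 + cmod (M$1$2) ^2 = 1"
proof -
  show "M = mk (M$1$1) (M$1$2) (- cnj (M$1$2)) (cnj (M$1$1))" using assms by (simp add: SU2_def mat22_eq)
  have "M$1$1 * cnj (M$1$1) + M$1$2 * cnj (M$1$2) = 1" using assms unfolding SU2_def by auto
  then have "(Re (M$1$1))^2 + (Im (M$1$1))^2 + ((Re (M$1$2))^2 + (Im (M$1$2))^2) = 1"
    by (simp add: complex_eq_iff power2_eq_square)
  then show "cmod (M$1$1) ^2 + cmod (M$1$2) ^2 = 1" by (simp add: cmod_power2)
qed

lemma inv_form: assumes "cmod a ^2 + cmod b ^2 = 1"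
  shows "matrix_inv (mk a b (- cnj b) (cnj a)) = mk (cnj a) (-b) (cnj b) a"
proof -
  have h: "(Re a)^2 + (Im a)^2 + ((Re b)^2 + (Im b)^2) = 1" using assms by (simp add: cmod_power2)
  have e: "a * cnj a + b * cnj b = 1" "cnj a * a + cnj b * b = 1"
    using h by (simp_all add: complex_eq_iff power2_eq_square)
  show ?thesis
    by (rule matrix_inv_eq) (simp_all add: mk_mult mk_one e algebra_simps)
qed

lemma su2_of_inj: assumes "su2_of x = su2_of y" shows "x = y"
proof -
  have "su2_of x $1$1 = su2_of y $1$1" "su2_of x $2$1 = su2_of y $2$1" using assms by simp_all
  then show ?thesis by (auto simp: su2_of_def vec_eq_iff forall_3 complex_eq_iff)
qed

lemma su2_coords_of: "su2_coords (su2_of x) = x"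
  unfolding su2_coords_def by (rule the_equality) (auto dest: su2_of_inj)

lemma ip_rr:
  assumes n: "cmod a ^2 + cmod b ^2 = 1"
  shows "ip (mk a b (- cnj b) (cnj a) ** kk ** mk (cnj a) (-b) (cnj b) a) (mk a b (- cnj b) (cnj a) ** kk ** mk (cnj a) (-b) (cnj b) a) = 1"
proof -
  obtain a1 a2 where ea: "a = Complex a1 a2" by (metis complex.exhaust_sel)
  obtain b1 b2 where eb: "b = Complex b1 b2" by (metis complex.exhaust_sel)
  have "a1^2+a2^2+b1^2+b2^2 = 1" using n unfolding ea eb by (simp add: cmod_power2)
  then have "(a1^2+a2^2+b1^2+b2^2)^2 = 1" by simp
  then show ?thesis unfolding ip_def kk_mk ea eb 
    by (simp add: mk_mult mk_trace algebra_simps power2_eq_square)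
qed

lemma tip_form:
  assumes n: "cmod a ^2 + cmod b ^2 = 1"
  shows "(let x = su2_coords (- (s *\<^sub>R (mk a b (- cnj b) (cnj a) ** kk ** mk (cnj a) (-b) (cnj b) a))) in Complex (x$1) (x$2)) = 2 * s * a * b"
proof -
  obtain a1 a2 where ea: "a = Complex a1 a2" by (metis complex.exhaust_sel)
  obtain b1 b2 where eb: "b = Complex b1 b2" by (metis complex.exhaust_sel)
  define z where "z = 2 * s * a * b"
  have "- (s *\<^sub>R (mk a b (- cnj b) (cnj a) ** kk ** mk (cnj a) (-b) (cnj b) a)) = su2_of (vector [Re z, Im z, - s * ((a1^2+a2^2) - (b1^2+b2^2))])"
    unfolding z_def kk_mk ea eb
    apply (simp add: mk_mult mat22_eq su2_of_def complex_eq_iff algebra_simps power2_eq_square)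
    apply (simp add: field_simps)
    done
  then have "(let x = su2_coords (- (s *\<^sub>R (mk a b (- cnj b) (cnj a) ** kk ** mk (cnj a) (-b) (cnj b) a))) in Complex (x$1) (x$2)) = z"
    by (simp add: su2_coords_of Let_def)
  then show ?thesis by (simp add: z_def)
qed

lemma R2_helper:
  fixes V W A X Y F :: real
  assumes "W \<noteq> 0" "V \<noteq> 0" "A > 0"
  shows "(1/2) * V / W * (X * W / A * F) * Y / V = (1/2) * (X * Y) / A * F"
  using assms by (simp add: field_simps)

lemma u_form:
  assumes n: "cmod a ^2 + cmod b ^2 = 1"
  shows "ip (mk a b (- cnj b) (cnj a) ** kk ** mk (cnj a) (-b) (cnj b) a) kk = cmod a ^2 - cmod b ^2"
proof -
  obtain a1 a2 where ea: "a = Complex a1 a2" by (metis complex.exhaust_sel)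
  obtain b1 b2 where eb: "b = Complex b1 b2" by (metis complex.exhaust_sel)
  show ?thesis unfolding cmod_power2 ip_def kk_mk ea eb 
    by (simp add: mk_mult mk_trace algebra_simps power2_eq_square)
qed

theorem mainTheorem5:
  fixes A C s p :: real and I J :: "real set" and \<Phi> :: "real \<Rightarrow> cmat"
    and \<phi> :: "real \<Rightarrow> real" and t :: real
  assumes "A > 0" and "C > 0" and "s > 0" and "p > 0"
    and "open I" and "is_interval I"
    and "is_motion A C p s I \<Phi>"
    and "t \<in> I" and "-1 < uu \<Phi> t" and "uu \<Phi> t < 1"
    and "open J" and "t \<in> J" and "J \<subseteq> I"
    and "continuous_on J \<phi>"
    and "\<forall>\<tau>\<in>J. tip s \<Phi> \<tau> = of_real (cmod (tip s \<Phi> \<tau>)) * exp (\<i> * of_real (\<phi> \<tau>))"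
  shows "\<exists>d. (\<phi> has_real_derivative d) (at t) \<and>
    \<i> * of_real d =
      of_real ((1/2) * ((uu \<Phi> t)^2 - (e4 A p s)^2) / (1 - (e4 A p s)^2)
        * (wm1 A p s (ll A C p s \<Phi> t) (nn A C p s \<Phi> t) / (uu \<Phi> t + 1)
           - wp1 A p s (ll A C p s \<Phi> t) (nn A C p s \<Phi> t) / (uu \<Phi> t - 1)))
      * u_over_w A p s (uu \<Phi> t)"
proof -
  note asm = assms
  have mot: "\<And>\<tau>. \<tau> \<in> I \<Longrightarrow> \<Phi> \<tau> \<in> SU2 \<and> \<Phi> differentiable at \<tau>"
    using assms(7) unfolding is_motion_def by blast
  define a where "a = \<Phi> t $1$1"
  define b where "b = \<Phi> t $1$2"
  have St: "\<Phi> t \<in> SU2" using mot assms(8) by blast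
  have n: "cmod a ^2 + cmod b ^2 = 1" using su2_form(2)[OF St] unfolding a_def b_def .
  have Pt: "\<Phi> t = mk a b (- cnj b) (cnj a)" using su2_form(1)[OF St] unfolding a_def b_def .
  define D where "D = vector_derivative \<Phi> (at t)"
  have dP: "(\<Phi> has_vector_derivative D) (at t)"
    using mot[OF assms(8)] vector_derivative_works unfolding D_def by blast
  have comp: "((\<lambda>\<tau>. \<Phi> \<tau> $ i $ j) has_vector_derivative D $ i $ j) (at t)" for i j
  proof -
    have "((\<lambda>\<tau>. \<Phi> \<tau> $ i) has_vector_derivative D $ i) (at t)"
      using bounded_linear.has_vector_derivative[OF bounded_linear_vec_nth dP] .
    then show ?thesis using bounded_linear.has_vector_derivative[OF bounded_linear_vec_nth] by blast
  qed
  define a' where "a' = D $1$1"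
  define b' where "b' = D $1$2"
  have D21: "D $2$1 = - cnj b'"
  proof -
    have "((\<lambda>\<tau>. - cnj (\<Phi> \<tau> $1$2)) has_vector_derivative - cnj b') (at t)"
      unfolding b'_def by (intro derivative_intros comp)
    then have "((\<lambda>\<tau>. \<Phi> \<tau> $2$1) has_vector_derivative - cnj b') (at t)"
      by (rule has_vector_derivative_transform_within_open[OF _ assms(5) assms(8)])
         (use mot in \<open>auto simp: SU2_def\<close>)
    then show ?thesis using comp vector_derivative_unique_at by blast
  qed
  have D22: "D $2$2 = cnj a'"
  proof -
    have "((\<lambda>\<tau>. cnj (\<Phi> \<tau> $1$1)) has_vector_derivative cnj a') (at t)"
      unfolding a'_def by (intro derivative_intros comp)
    then have "((\<lambda>\<tau>. \<Phi> \<tau> $2$2) has_vector_derivative cnj a') (at t)"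
      by (rule has_vector_derivative_transform_within_open[OF _ assms(5) assms(8)])
         (use mot in \<open>auto simp: SU2_def\<close>)
    then show ?thesis using comp vector_derivative_unique_at by blast
  qed
  have Dmk: "D = mk a' b' (- cnj b') (cnj a')"
    using mk_eta[of D] D21 D22 unfolding a'_def b'_def by simp
  define N where "N = mk (cnj a) (-b) (cnj b) a"
  define w where "w = D ** N"
  define r where "r = mk a b (- cnj b) (cnj a) ** kk ** N"
  have om: "omega \<Phi> t = w" unfolding omega_def w_def N_def D_def[symmetric] Pt inv_form[OF n] ..
  have rv: "rvec \<Phi> t = r" unfolding rvec_def r_def N_def Pt inv_form[OF n] ..
  define u where "u = uu \<Phi> t"
  have u_eq: "u = ip r kk" unfolding u_def uu_def rv ..
  have u2: "u = cmod a ^2 - cmod b ^2" unfolding u_eq r_def N_def u_form[OF n] ..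
  have a0: "a \<noteq> 0" using u2 n assms(9) unfolding u_def by auto
  have b0: "b \<noteq> 0" using u2 n assms(10) unfolding u_def by auto
  have corex: "Im ((a' * b + a * b') / (a * b)) * (1 - u^2) = ip w kk - u * ip w r"
    unfolding u_eq w_def r_def N_def Dmk by (rule core[OF n a0 b0])
  have rr: "ip r r = 1" unfolding r_def N_def by (rule ip_rr[OF n])
  define l where "l = ll A C p s \<Phi> t"
  define nv where "nv = nn A C p s \<Phi> t"
  have lnu: "l - nv * u = A * (ip w kk - u * ip w r)"
    unfolding l_def nv_def ll_def nn_def om rv u_eq using l_minus_nu[OF rr] by simp
  define d where "d = Im ((a' * b + a * b') / (a * b))"
  have "1 - u^2 = (1-u)*(1+u)" by (simp add: power2_eq_square algebra_simps)
  then have u1: "1 - u^2 > 0" using assms(9,10) unfolding u_def by simp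
  have "A * (d*(1-u^2)) = l - nv*u" using corex lnu unfolding d_def by simp
  then have d_eq: "d = (l - nv * u) / (A * (1 - u^2))"
    using u1 assms(1) by (simp add: field_simps)
  define ee where "ee = e4 A p s"
  have ps: "p * s > 0" using assms(3,4) by simp
  have e2: "ee^2 = 1 + A / (p * s)" unfolding ee_def e4_def
    using assms(1) ps by (simp add: less_imp_le)
  have Aps: "A / (p * s) > 0" using assms(1) ps by simp
  have e1: "1 - ee^2 \<noteq> 0" using e2 Aps by linarith
  have "u^2 < 1" using u1 by simp
  then have ue: "u^2 - ee^2 \<noteq> 0" using e2 Aps by simp
  have sq: "sqrt (s/2) * sqrt (2/s) = 1" using assms(3)
    by (simp add: real_sqrt_mult[symmetric])
  have up: "u + 1 \<noteq> 0" "u - 1 \<noteq> 0" using assms(9,10) unfolding u_def by auto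
  have fr: "(l+nv)/(u+1) - (l-nv)/(u-1) = 2*(l - nv*u)/(1-u^2)"
    using up u1 by (simp add: field_simps power2_eq_square)
  define R where "R = (1/2) * (u^2 - ee^2) / (1 - ee^2)
        * (wm1 A p s l nv / (u + 1) - wp1 A p s l nv / (u - 1))"
  define K where "K = sqrt (s/2) * (1 - ee^2) / A"
  have wm: "wm1 A p s l nv = K*(l+nv)" unfolding wm1_def K_def ee_def by simp
  have wp: "wp1 A p s l nv = K*(l-nv)" unfolding wp1_def K_def ee_def by simp
  have R1: "wm1 A p s l nv / (u + 1) - wp1 A p s l nv / (u - 1) = sqrt (s/2) * (1 - ee^2) / A * ((l+nv)/(u+1) - (l-nv)/(u-1))"
    unfolding wm wp K_def[symmetric] by (simp add: right_diff_distrib)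
  have R2: "R * sqrt (2/s) / (u^2 - ee^2) = d"
  proof -
    have "R * sqrt (2/s) / (u^2 - ee^2) = (1/2) * (sqrt (s/2) * sqrt (2/s)) / A * ((l+nv)/(u+1) - (l-nv)/(u-1))"
      unfolding R_def R1 using e1 ue assms(1) by (rule R2_helper)
    also have "\<dots> = d" unfolding sq fr d_eq using assms(1) u1 by (simp add: field_simps)
    finally show ?thesis .
  qed
  have rhs: "complex_of_real R * u_over_w A p s u = \<i> * complex_of_real d"
    unfolding u_over_w_def ee_def[symmetric] R2[symmetric] by simp
  define cf where "cf \<tau> = (2 * complex_of_real s) * (\<Phi> \<tau> $1$1 * \<Phi> \<tau> $1$2)" for \<tau>
  have tip_cf: "tip s \<Phi> \<tau> = cf \<tau>" if "\<tau> \<in> I" for \<tau>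
  proof -
    have S: "\<Phi> \<tau> \<in> SU2" using mot that by blast
    have nn: "cmod (\<Phi> \<tau> $1$1) ^2 + cmod (\<Phi> \<tau> $1$2) ^2 = 1" using su2_form(2)[OF S] .
    have "rvec \<Phi> \<tau> = mk (\<Phi> \<tau> $1$1) (\<Phi> \<tau> $1$2) (- cnj (\<Phi> \<tau> $1$2)) (cnj (\<Phi> \<tau> $1$1)) ** kk ** mk (cnj (\<Phi> \<tau> $1$1)) (- (\<Phi> \<tau> $1$2)) (cnj (\<Phi> \<tau> $1$2)) (\<Phi> \<tau> $1$1)"
      unfolding rvec_def by (subst (1 2) su2_form(1)[OF S]) (simp only: inv_form[OF nn])
    then show ?thesis unfolding tip_def cf_def using tip_form[OF nn, of s] by (simp add: mult.assoc)
  qed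
  define c' where "c' = (2 * complex_of_real s) * (a * b' + a' * b)"
  have dc: "(cf has_vector_derivative c') (at t)"
  proof -
    have "((\<lambda>\<tau>. \<Phi> \<tau> $1$1 * \<Phi> \<tau> $1$2) has_vector_derivative (a * b' + a' * b)) (at t)"
      using has_vector_derivative_mult[OF comp comp] unfolding a_def b_def a'_def b'_def .
    then show ?thesis unfolding cf_def c'_def by (rule has_vector_derivative_mult_right)
  qed
  have ct0: "cf t \<noteq> 0" using a0 b0 assms(3) unfolding cf_def a_def b_def by simp
  have cd: "Im (c' / cf t) = d"
  proof -
    have "c' / cf t = (a' * b + a * b') / (a * b)" unfolding c'_def cf_def a_def[symmetric] b_def[symmetric]
      using assms(3) a0 b0 by (simp add: field_simps)
    then show ?thesis unfolding d_def by simp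
  qed
  define g where "g \<tau> = Im (Ln (cf \<tau> / cf t))" for \<tau>
  have dg: "(g has_real_derivative d) (at t)"
  proof -
    have d1: "((\<lambda>\<tau>. cf \<tau> / cf t) has_vector_derivative c' / cf t) (at t)"
      by (rule has_vector_derivative_divide[OF dc])
    have d2: "(Ln has_field_derivative inverse (cf t / cf t)) (at (cf t / cf t))"
      by (rule has_field_derivative_Ln) (simp add: ct0)
    have "((\<lambda>\<tau>. Im ((Ln \<circ> (\<lambda>\<tau>. cf \<tau> / cf t)) \<tau>)) has_vector_derivative Im (c' / cf t * inverse (cf t / cf t))) (at t)"
      using bounded_linear.has_vector_derivative[OF bounded_linear_Im field_vector_diff_chain_at[OF d1 d2]] .
    then show ?thesis unfolding has_real_derivative_iff_has_vector_derivative g_def o_def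
      using ct0 cd by simp
  qed
  have g0: "g t = 0" unfolding g_def using ct0 by simp
  have contphi: "isCont \<phi> t" using assms(11,12,14) continuous_on_eq_continuous_at by blast
  have contg: "isCont g t" using dg DERIV_isCont by blast
  have contc: "isCont cf t" using has_vector_derivative_continuous[OF dc] by simp
  have lim: "((\<lambda>\<tau>. \<phi> \<tau> - \<phi> t - g \<tau>) \<longlongrightarrow> 0) (at t)"
  proof -
    have "((\<lambda>\<tau>. \<phi> \<tau> - \<phi> t - g \<tau>) \<longlongrightarrow> \<phi> t - \<phi> t - g t) (at t)"
      using contphi contg unfolding isCont_def by (intro tendsto_intros)
    then show ?thesis using g0 by simp
  qed
  have ev1: "eventually (\<lambda>\<tau>. dist (\<phi> \<tau> - \<phi> t - g \<tau>) 0 < 2*pi) (at t)"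
    using tendstoD[OF lim] by simp
  have ev2: "eventually (\<lambda>\<tau>. cf \<tau> \<noteq> 0) (at t)"
    using tendsto_imp_eventually_ne[OF contc[unfolded isCont_def] ct0] .
  have ev3: "eventually (\<lambda>\<tau>. \<tau> \<in> J) (at t)" using eventually_at_in_open'[OF assms(11,12)] .
  have ev: "eventually (\<lambda>\<tau>. \<phi> \<tau> = \<phi> t + g \<tau>) (at t)"
    using ev1 ev2 ev3
  proof eventually_elim
    case (elim \<tau>)
    have tI: "\<tau> \<in> I" "t \<in> I" using elim assms(13,12) by auto
    have tau: "cf \<tau> = of_real (cmod (cf \<tau>)) * exp (\<i> * of_real (\<phi> \<tau>))"
      using assms(15) elim tip_cf[OF tI(1)] by metis
    have tt: "cf t = of_real (cmod (cf t)) * exp (\<i> * of_real (\<phi> t))"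
      using assms(15) assms(12) tip_cf[OF tI(2)] by metis
    define z where "z = cf \<tau> / cf t"
    have z0: "z \<noteq> 0" using elim ct0 unfolding z_def by simp
    have z1: "z = of_real (cmod z) * exp (\<i> * of_real (g \<tau>))"
      using Arg_eq[OF z0] Arg_eq_Im_Ln[OF z0] unfolding g_def z_def[symmetric] by simp
    have z2: "z = of_real (cmod z) * exp (\<i> * of_real (\<phi> \<tau> - \<phi> t))"
    proof -
      have "z = of_real (cmod (cf \<tau>) / cmod (cf t)) * (exp (\<i> * of_real (\<phi> \<tau>)) / exp (\<i> * of_real (\<phi> t)))"
        unfolding z_def by (subst tau, subst tt) (simp add: field_simps)
      moreover have "cmod z = cmod (cf \<tau>) / cmod (cf t)" unfolding z_def by (simp add: norm_divide)
      ultimately show ?thesis by (simp add: exp_diff[symmetric] algebra_simps)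
    qed
    have cz: "complex_of_real (cmod z) \<noteq> 0" using z0 by simp
    have "complex_of_real (cmod z) * exp (\<i> * of_real (g \<tau>)) = complex_of_real (cmod z) * exp (\<i> * of_real (\<phi> \<tau> - \<phi> t))"
      using z1 z2 by metis
    then have "exp (\<i> * of_real (g \<tau>)) = exp (\<i> * of_real (\<phi> \<tau> - \<phi> t))" using cz mult_left_cancel by blast
    moreover have "\<i> * of_real (\<phi> \<tau> - \<phi> t - g \<tau>) = \<i> * of_real (\<phi> \<tau> - \<phi> t) - \<i> * of_real (g \<tau>)"
      by (simp add: algebra_simps)
    ultimately have "exp (\<i> * of_real (\<phi> \<tau> - \<phi> t - g \<tau>)) = 1"
      by (simp only: exp_diff) simp
    then obtain k :: int where k: "\<phi> \<tau> - \<phi> t - g \<tau> = of_int (2 * k) * pi"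
      unfolding exp_eq_1 by auto
    have "\<bar>of_int (2 * k) * pi\<bar> < 2 * pi" using elim(1) k by (simp add: dist_real_def)
    then have "\<bar>real_of_int k\<bar> < 1" by (simp add: abs_mult)
    then have "k = 0" by linarith
    then show ?case using k by simp
  qed
  then obtain S where S: "open S" "t \<in> S" "\<And>x. x \<in> S \<Longrightarrow> x \<noteq> t \<Longrightarrow> \<phi> x = \<phi> t + g x"
    unfolding eventually_at_topological by auto
  have "((\<lambda>\<tau>. \<phi> t + g \<tau>) has_real_derivative d) (at t)"
    using DERIV_add[OF DERIV_const dg] by simp
  then have dphi: "(\<phi> has_real_derivative d) (at t)"
    by (rule has_field_derivative_transform_within_open[OF _ S(1,2)]) (metis S(3) g0 add.right_neutral)
  show ?thesis
    apply (rule exI[of _ d])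
    using dphi rhs unfolding R_def u_def ee_def l_def nv_def by simp
qed
end
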